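(* With the setting in the context, call two operators $Q_m,Q_{m'}$ with $m,m'\in\ker(\delta_0)$ equivalent if they have the same eigenvalue on every ground state $\mathcal A_0|f\rangle$, $f\in\ker(\delta^0)$ (equivalently, $m$ and $m'$ agree on $\ker(\delta^0)$). Then the assignment sending $Q_m$ to the character $\bar m:H^0(C,G)\to U(1)$, $\bar m([f])=m(f)$, is well defined and induces a bijection between the set of equivalence classes of such operators and the character group $\widehat{H^0(C,G)}=\mathrm{Hom}(H^0(C,G),U(1))$.
   Context: $(C_\bullet,\partial^C_\bullet)$ is a chain complex with each $C_n$ free abelian on a finite set $K_n$, $K_n\ne\emptyset$ for finitely many $n$; $(G_\bullet,\partial^G_\bullet)$ is a chain complex of finite abelian groups. $\mathrm{hom}(C,G)^p=\prod_n\mathrm{Hom}(C_n,G_{n-p})$ with $(\delta^pf)_n=f_{n-1}\partial^C_n-(-1)^p\partial^G_{n-p}f_n$, and $H^0(C,G)=\ker\delta^0/\mathrm{im}\,\delta^{-1}$. $\mathrm{hom}(C,G)_p=\mathrm{Hom}(\mathrm{hom}(C,G)^p,U(1))$ (written additively), $\delta_0:\mathrm{hom}(C,G)_0\to\mathrm{hom}(C,G)_{-1}$, $\delta_0m=m\circ\delta^{-1}$. $\mathcal H=\bigotimes_n\bigotimes_{x\in K_n}\mathbb C[G_n]$ with orthonormal basis $|f\rangle$, $f\in\mathrm{hom}(C,G)^0$. $Q_m|f\rangle=m(f)|f\rangle$, $P_t|f\rangle=|f+t\rangle$, and $\mathcal A_0=\frac1{|\mathrm{hom}(C,G)^{-1}|}\sum_{t\in\mathrm{hom}(C,G)^{-1}}P_{\delta^{-1}t}$.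 *)

theory Defs
  imports Complex_Main "HOL-Algebra.Algebra"
begin

text \<open>The chain complex C has C_n free abelian on the finite set K n; its boundary
  \<partial>^C_n is encoded by the integer matrix d: for x in K n,
  \<partial>^C_n x = sum over y in K (n-1) of (d n x y) y.  The finite abelian groups G_n are
  HOL-Algebra groups (written multiplicatively), with boundaries dG n : G n \<rightarrow> G (n-1).
  A homomorphism C_n \<rightarrow> G_(n-p) is determined by its values on the basis K n, so an element
  of hom(C,G)^p is an (extensional) function f with f n x in G (n-p) for x in K n.\<close>

definition chain_setting ::
  "(int \<Rightarrow> 'k set) \<Rightarrow> (int \<Rightarrow> 'k \<Rightarrow> 'k \<Rightarrow> int) \<Rightarrow> (int \<Rightarrow> ('g,'b) monoid_scheme) \<Rightarrow> (int \<Rightarrow> 'g \<Rightarrow> 'g) \<Rightarrow> bool"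
  where
  "chain_setting K d G dG \<longleftrightarrow>
     (\<forall>n. finite (K n)) \<and> finite {n. K n \<noteq> {}} \<and>
     (\<forall>n x z. x \<in> K n \<longrightarrow> z \<in> K (n - 2) \<longrightarrow> (\<Sum>y\<in>K (n - 1). d n x y * d (n - 1) y z) = 0) \<and>
     (\<forall>n. comm_group (G n) \<and> finite (carrier (G n))) \<and>
     (\<forall>n. dG n \<in> hom (G n) (G (n - 1))) \<and>
     (\<forall>n. \<forall>g\<in>carrier (G n). dG (n - 1) (dG n g) = \<one>\<^bsub>G (n - 2)\<^esub>)"

definition cochains :: "(int \<Rightarrow> 'k set) \<Rightarrow> (int \<Rightarrow> ('g,'b) monoid_scheme) \<Rightarrow> int \<Rightarrow> (int \<Rightarrow> 'k \<Rightarrow> 'g) set"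
  where
  "cochains K G p = {f. \<forall>n x. (x \<in> K n \<longrightarrow> f n x \<in> carrier (G (n - p))) \<and> (x \<notin> K n \<longrightarrow> f n x = undefined)}"

definition cochain_group :: "(int \<Rightarrow> 'k set) \<Rightarrow> (int \<Rightarrow> ('g,'b) monoid_scheme) \<Rightarrow> int \<Rightarrow> (int \<Rightarrow> 'k \<Rightarrow> 'g) monoid"
  where
  "cochain_group K G p =
     \<lparr>carrier = cochains K G p,
      monoid.mult = (\<lambda>f h n x. if x \<in> K n then f n x \<otimes>\<^bsub>G (n - p)\<^esub> h n x else undefined),
      monoid.one = (\<lambda>n x. if x \<in> K n then \<one>\<^bsub>G (n - p)\<^esub> else undefined)\<rparr>"

definition sign_pow :: "int \<Rightarrow> int" where
  "sign_pow p = (if even p then 1 else -1)"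

text \<open>(\<delta>^p f)_n = f_(n-1) \<partial>^C_n - (-1)^p \<partial>^G_(n-p) f_n, evaluated on basis elements x of C_n\<close>
definition coboundary ::
  "(int \<Rightarrow> 'k set) \<Rightarrow> (int \<Rightarrow> 'k \<Rightarrow> 'k \<Rightarrow> int) \<Rightarrow> (int \<Rightarrow> ('g,'b) monoid_scheme) \<Rightarrow> (int \<Rightarrow> 'g \<Rightarrow> 'g)
    \<Rightarrow> int \<Rightarrow> (int \<Rightarrow> 'k \<Rightarrow> 'g) \<Rightarrow> (int \<Rightarrow> 'k \<Rightarrow> 'g)"
  where
  "coboundary K d G dG p f = (\<lambda>n x. if x \<in> K n then
      (\<Otimes>\<^bsub>G (n - p - 1)\<^esub>y\<in>K (n - 1). f (n - 1) y [^]\<^bsub>G (n - p - 1)\<^esub> d n x y)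
      \<otimes>\<^bsub>G (n - p - 1)\<^esub> (dG (n - p) (f n x) [^]\<^bsub>G (n - p - 1)\<^esub> (- sign_pow p))
    else undefined)"

definition cocycles0 where
  "cocycles0 K d G dG = {f \<in> cochains K G 0. coboundary K d G dG 0 f = \<one>\<^bsub>cochain_group K G 1\<^esub>}"

definition coboundaries0 where
  "coboundaries0 K d G dG = coboundary K d G dG (-1) ` cochains K G (-1)"

definition H0_group where
  "H0_group K d G dG = ((cochain_group K G 0)\<lparr>carrier := cocycles0 K d G dG\<rparr>) Mod coboundaries0 K d G dG"

definition U1 :: "complex monoid" where
  "U1 = \<lparr>carrier = {z. cmod z = 1}, monoid.mult = (*), monoid.one = 1\<rparr>"

definition characters :: "('a,'c) monoid_scheme \<Rightarrow> ('a \<Rightarrow> complex) set" where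
  "characters H = hom H U1 \<inter> extensional (carrier H)"

text \<open>ker \<delta>_0 inside hom(C,G)_0 = Hom(hom(C,G)^0, U(1)); \<delta>_0 m = m \<circ> \<delta>^{-1}\<close>
definition ker_dual0 where
  "ker_dual0 K d G dG = {m \<in> characters (cochain_group K G 0).
      \<forall>t\<in>cochains K G (-1). m (coboundary K d G dG (-1) t) = 1}"

text \<open>The Hilbert space: functions hom(C,G)^0 \<rightarrow> \<complex> (vanishing outside); |f> is ket f.\<close>
definition ket :: "'a \<Rightarrow> 'a \<Rightarrow> complex" where
  "ket f = (\<lambda>g. if g = f then 1 else 0)"

definition Qop :: "'a set \<Rightarrow> ('a \<Rightarrow> complex) \<Rightarrow> ('a \<Rightarrow> complex) \<Rightarrow> ('a \<Rightarrow> complex)" where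
  "Qop S m \<psi> = (\<lambda>g. if g \<in> S then m g * \<psi> g else 0)"

text \<open>P_t |f> = |f + t> (group written multiplicatively)\<close>
definition Pop :: "('a,'c) monoid_scheme \<Rightarrow> 'a \<Rightarrow> ('a \<Rightarrow> complex) \<Rightarrow> ('a \<Rightarrow> complex)" where
  "Pop H t \<psi> = (\<lambda>g. if g \<in> carrier H then \<psi> (g \<otimes>\<^bsub>H\<^esub> inv\<^bsub>H\<^esub> t) else 0)"

definition A0 where
  "A0 K d G dG \<psi> = (\<lambda>g. (\<Sum>t\<in>cochains K G (-1).
       Pop (cochain_group K G 0) (coboundary K d G dG (-1) t) \<psi> g) / of_nat (card (cochains K G (-1))))"

definition Qops where
  "Qops K d G dG = Qop (cochains K G 0) ` ker_dual0 K d G dG"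

definition same_ground_eigenvalue where
  "same_ground_eigenvalue K d G dG Q Q' \<longleftrightarrow>
     (\<forall>f\<in>cocycles0 K d G dG. \<exists>c::complex.
        Q (A0 K d G dG (ket f)) = (\<lambda>g. c * A0 K d G dG (ket f) g) \<and>
        Q' (A0 K d G dG (ket f)) = (\<lambda>g. c * A0 K d G dG (ket f) g))"

definition Qrel where
  "Qrel K d G dG = {(Q, Q'). Q \<in> Qops K d G dG \<and> Q' \<in> Qops K d G dG \<and> same_ground_eigenvalue K d G dG Q Q'}"

definition mbar where
  "mbar K d G dG m = (\<lambda>c\<in>carrier (H0_group K d G dG). m (SOME f. f \<in> c))"

end

theory Submission
  imports Defs
begin

context comm_group begin

lemma finprod_int_pow:
  assumes "f \<in> A \<rightarrow> carrier G"
  shows "(\<Otimes>y\<in>A. f y) [^] (i::int) = (\<Otimes>y\<in>A. f y [^] i)"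
  using assms
proof (induct A rule: infinite_finite_induct)
  case (insert a A)
  then have fA: "f \<in> A \<rightarrow> carrier G" and fa: "f a \<in> carrier G" by auto
  have "(\<lambda>y. f y [^] i) \<in> A \<rightarrow> carrier G" using fA by auto
  then show ?case using insert fA fa by (simp add: int_pow_distrib)
qed auto

lemma finprod_pow_sum:
  assumes "x \<in> carrier G"
  shows "(\<Otimes>y\<in>A. x [^] (e y::int)) = x [^] (\<Sum>y\<in>A. e y)"
proof (induct A rule: infinite_finite_induct)
  case (insert a A)
  have "(\<lambda>y. x [^] (e y::int)) \<in> A \<rightarrow> carrier G" using assms by auto
  then show ?case using insert assms by (simp add: int_pow_mult)
qed auto

lemma finprod_swap:
  assumes "finite B" "\<And>y z. y \<in> A \<Longrightarrow> z \<in> B \<Longrightarrow> f y z \<in> carrier G"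
  shows "(\<Otimes>y\<in>A. \<Otimes>z\<in>B. f y z) = (\<Otimes>z\<in>B. \<Otimes>y\<in>A. f y z)"
  using assms(2)
proof (induct A rule: infinite_finite_induct)
  case (infinite A)
  then show ?case by (simp add: finprod_one_eqI)
next
  case (insert a A)
  have c1: "(\<lambda>y. \<Otimes>z\<in>B. f y z) \<in> A \<rightarrow> carrier G" using insert by (auto intro!: finprod_closed)
  have c2: "(\<lambda>z. f a z) \<in> B \<rightarrow> carrier G" "(\<lambda>z. \<Otimes>y\<in>A. f y z) \<in> B \<rightarrow> carrier G"
    using insert by (auto intro!: finprod_closed)
  have "(\<Otimes>y\<in>insert a A. \<Otimes>z\<in>B. f y z) = (\<Otimes>z\<in>B. f a z) \<otimes> (\<Otimes>y\<in>A. \<Otimes>z\<in>B. f y z)"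
    using insert c1 c2 by (subst finprod_insert) auto
  also have "\<dots> = (\<Otimes>z\<in>B. f a z) \<otimes> (\<Otimes>z\<in>B. \<Otimes>y\<in>A. f y z)" using insert by simp
  also have "\<dots> = (\<Otimes>z\<in>B. f a z \<otimes> (\<Otimes>y\<in>A. f y z))" using c2 by simp
  also have "\<dots> = (\<Otimes>z\<in>B. \<Otimes>y\<in>insert a A. f y z)"
    using insert by (intro finprod_cong') (auto intro!: finprod_closed)
  finally show ?case .
qed simp

end

lemma hom_finprod_gen:
  assumes H: "comm_group H" and H': "comm_group H'" and h: "h \<in> hom H H'"
    and f: "f \<in> A \<rightarrow> carrier H" and fin: "finite A"
  shows "h (finprod H f A) = finprod H' (\<lambda>y. h (f y)) A"
  using fin f
proof (induct A rule: finite_induct)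
  case empty
  interpret H: comm_group H by fact
  interpret H': comm_group H' by fact
  interpret gh: group_hom H H' h using h by (simp add: group_hom_def group_hom_axioms_def H.group_axioms H'.group_axioms)
  show ?case by simp
next
  case (insert a A)
  interpret H: comm_group H by fact
  interpret H': comm_group H' by fact
  have ha: "\<And>x. x \<in> carrier H \<Longrightarrow> h x \<in> carrier H'" using h by (auto simp: hom_def)
  have hm: "\<And>x y. x \<in> carrier H \<Longrightarrow> y \<in> carrier H \<Longrightarrow> h (x \<otimes>\<^bsub>H\<^esub> y) = h x \<otimes>\<^bsub>H'\<^esub> h y"
    using h by (auto simp: hom_def)
  have fA: "f \<in> A \<rightarrow> carrier H" and fa: "f a \<in> carrier H" using insert by auto
  have "(\<lambda>y. h (f y)) \<in> A \<rightarrow> carrier H'" using fA ha by auto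
  then show ?case using insert fA fa ha hm by (simp add: H.finprod_closed)
qed


locale cs =
  fixes K :: "int \<Rightarrow> 'k set" and d :: "int \<Rightarrow> 'k \<Rightarrow> 'k \<Rightarrow> int"
    and G :: "int \<Rightarrow> ('g,'b) monoid_scheme" and dG :: "int \<Rightarrow> 'g \<Rightarrow> 'g"
  assumes cs: "chain_setting K d G dG"
begin

lemma finK: "finite (K n)" using cs unfolding chain_setting_def by blast
lemma finN: "finite {n. K n \<noteq> {}}" using cs unfolding chain_setting_def by blast
lemma dd: "x \<in> K n \<Longrightarrow> z \<in> K (n - 2) \<Longrightarrow> (\<Sum>y\<in>K (n - 1). d n x y * d (n - 1) y z) = 0"
  using cs unfolding chain_setting_def by blast
lemma Gcg: "comm_group (G n)" using cs unfolding chain_setting_def by blast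
lemma Gfin: "finite (carrier (G n))" using cs unfolding chain_setting_def by blast
lemma dGhom: "dG n \<in> hom (G n) (G (n - 1))" using cs unfolding chain_setting_def by blast
lemma dGdG: "g \<in> carrier (G n) \<Longrightarrow> dG (n - 1) (dG n g) = \<one>\<^bsub>G (n - 2)\<^esub>"
  using cs unfolding chain_setting_def by blast

lemma Gg: "group (G n)" using Gcg comm_group.axioms(2) by blast
lemma Gm: "monoid (G n)" using Gg group.is_monoid by blast

lemma C_carrier[simp]: "carrier (cochain_group K G p) = cochains K G p"
  by (simp add: cochain_group_def)
lemma C_mult[simp]: "f \<otimes>\<^bsub>cochain_group K G p\<^esub> h = (\<lambda>n x. if x \<in> K n then f n x \<otimes>\<^bsub>G (n - p)\<^esub> h n x else undefined)"
  by (simp add: cochain_group_def)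
lemma C_one[simp]: "\<one>\<^bsub>cochain_group K G p\<^esub> = (\<lambda>n x. if x \<in> K n then \<one>\<^bsub>G (n - p)\<^esub> else undefined)"
  by (simp add: cochain_group_def)

lemma cochainsD: "f \<in> cochains K G p \<Longrightarrow> x \<in> K n \<Longrightarrow> f n x \<in> carrier (G (n - p))"
  by (simp add: cochains_def)
lemma cochainsD2: "f \<in> cochains K G p \<Longrightarrow> x \<notin> K n \<Longrightarrow> f n x = undefined"
  by (simp add: cochains_def)
lemma cochainsI: "(\<And>n x. x \<in> K n \<Longrightarrow> f n x \<in> carrier (G (n - p))) \<Longrightarrow> (\<And>n x. x \<notin> K n \<Longrightarrow> f n x = undefined) \<Longrightarrow> f \<in> cochains K G p"
  by (simp add: cochains_def)

lemma C_cg: "comm_group (cochain_group K G p)"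
proof (rule comm_groupI)
  fix f h assume "f \<in> carrier (cochain_group K G p)" "h \<in> carrier (cochain_group K G p)"
  then show "f \<otimes>\<^bsub>cochain_group K G p\<^esub> h \<in> carrier (cochain_group K G p)"
    by (auto intro!: cochainsI simp: cochainsD monoid.m_closed[OF Gm])
next
  show "\<one>\<^bsub>cochain_group K G p\<^esub> \<in> carrier (cochain_group K G p)"
    by (auto intro!: cochainsI simp: monoid.one_closed[OF Gm])
next
  fix f h k assume "f \<in> carrier (cochain_group K G p)" "h \<in> carrier (cochain_group K G p)" "k \<in> carrier (cochain_group K G p)"
  then show "f \<otimes>\<^bsub>cochain_group K G p\<^esub> h \<otimes>\<^bsub>cochain_group K G p\<^esub> k = f \<otimes>\<^bsub>cochain_group K G p\<^esub> (h \<otimes>\<^bsub>cochain_group K G p\<^esub> k)"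
    by (auto intro!: ext simp: cochainsD monoid.m_assoc[OF Gm])
next
  fix f h assume "f \<in> carrier (cochain_group K G p)" "h \<in> carrier (cochain_group K G p)"
  then show "f \<otimes>\<^bsub>cochain_group K G p\<^esub> h = h \<otimes>\<^bsub>cochain_group K G p\<^esub> f"
    by (auto intro!: ext simp: cochainsD comm_monoid.m_comm[OF comm_group.axioms(1)[OF Gcg]])
next
  fix f assume "f \<in> carrier (cochain_group K G p)"
  then show "\<one>\<^bsub>cochain_group K G p\<^esub> \<otimes>\<^bsub>cochain_group K G p\<^esub> f = f"
    by (auto intro!: ext simp: cochainsD cochainsD2 monoid.l_one[OF Gm])
next
  fix f assume f: "f \<in> carrier (cochain_group K G p)"
  show "\<exists>y\<in>carrier (cochain_group K G p). y \<otimes>\<^bsub>cochain_group K G p\<^esub> f = \<one>\<^bsub>cochain_group K G p\<^esub>"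
    apply (rule bexI[where x="\<lambda>n x. if x \<in> K n then inv\<^bsub>G (n - p)\<^esub> (f n x) else undefined"])
    using f by (auto intro!: ext cochainsI simp: cochainsD group.l_inv[OF Gg] group.inv_closed[OF Gg])
qed

lemma C_g: "group (cochain_group K G p)" using C_cg comm_group.axioms(2) by blast

lemma fin_cochains: "finite (cochains K G p)"
proof -
  define I where "I = (SIGMA n:{n. K n \<noteq> {}}. K n)"
  have fI: "finite I" unfolding I_def using finN finK by auto
  define F where "F = (\<lambda>f::int\<Rightarrow>'k\<Rightarrow>'g. \<lambda>(n,x)\<in>I. f n x)"
  have "inj_on F (cochains K G p)"
  proof (rule inj_onI)
    fix f h assume f: "f \<in> cochains K G p" and h: "h \<in> cochains K G p" and e: "F f = F h"
    show "f = h"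
    proof (intro ext)
      fix n x show "f n x = h n x"
      proof (cases "x \<in> K n")
        case True then have "(n,x) \<in> I" unfolding I_def by auto
        then show ?thesis using fun_cong[OF e, of "(n,x)"] unfolding F_def by simp
      next
        case False then show ?thesis using f h by (simp add: cochainsD2)
      qed
    qed
  qed
  moreover have "F ` cochains K G p \<subseteq> PiE I (\<lambda>(n,x). carrier (G (n - p)))"
    unfolding F_def I_def by (auto simp: cochainsD PiE_def extensional_def split: if_splits)
  moreover have "finite (PiE I (\<lambda>(n,x). carrier (G (n - p))))"
    using fI Gfin by (intro finite_PiE) auto
  ultimately show ?thesis using finite_imageD finite_subset by blast
qed

end

context cs begin

lemma Hmon: "Group.comm_monoid (G n)" using Gcg comm_group.axioms(1) by blast

lemma dG_mem: "g \<in> carrier (G n) \<Longrightarrow> dG n g \<in> carrier (G (n - 1))"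
  using dGhom by (auto simp: hom_def)
lemma dG_mult: "g \<in> carrier (G n) \<Longrightarrow> h \<in> carrier (G n) \<Longrightarrow> dG n (g \<otimes>\<^bsub>G n\<^esub> h) = dG n g \<otimes>\<^bsub>G (n - 1)\<^esub> dG n h"
  using dGhom by (auto simp: hom_def)

lemma tmem: "t \<in> cochains K G (-1) \<Longrightarrow> x \<in> K m \<Longrightarrow> t m x \<in> carrier (G (m + 1))"
  using cochainsD[of t "-1" x m] by simp
lemma gmem: "g \<in> cochains K G 0 \<Longrightarrow> x \<in> K m \<Longrightarrow> g m x \<in> carrier (G m)"
  using cochainsD[of g 0 x m] by simp

lemma d1_eq: "t \<in> cochains K G (-1) \<Longrightarrow> x \<in> K n \<Longrightarrow> coboundary K d G dG (-1) t n x =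
   (\<Otimes>\<^bsub>G n\<^esub> y\<in>K (n - 1). t (n - 1) y [^]\<^bsub>G n\<^esub> d n x y) \<otimes>\<^bsub>G n\<^esub> dG (n + 1) (t n x)"
  unfolding coboundary_def sign_pow_def
  using group.int_pow_1[OF Gg dG_mem[OF tmem[of t x n]]] by simp

lemma d0_eq: "g \<in> cochains K G 0 \<Longrightarrow> x \<in> K n \<Longrightarrow> coboundary K d G dG 0 g n x =
   (\<Otimes>\<^bsub>G (n - 1)\<^esub> y\<in>K (n - 1). g (n - 1) y [^]\<^bsub>G (n - 1)\<^esub> d n x y) \<otimes>\<^bsub>G (n - 1)\<^esub> inv\<^bsub>G (n - 1)\<^esub> (dG n (g n x))"
  unfolding coboundary_def sign_pow_def
  using group.int_pow_neg[OF Gg dG_mem[OF gmem[of g x n]], of 1] group.int_pow_1[OF Gg dG_mem[OF gmem[of g x n]]] by simp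

lemma cob_undef: "x \<notin> K n \<Longrightarrow> coboundary K d G dG p t n x = undefined"
  unfolding coboundary_def by simp

lemma d1_mem: "t \<in> cochains K G (-1) \<Longrightarrow> coboundary K d G dG (-1) t \<in> cochains K G 0"
proof (rule cochainsI)
  fix n x assume t: "t \<in> cochains K G (-1)" and x: "x \<in> K n"
  have "(\<lambda>y. t (n - 1) y [^]\<^bsub>G n\<^esub> d n x y) \<in> K (n - 1) \<rightarrow> carrier (G n)"
    using tmem[OF t, of _ "n - 1"] group.int_pow_closed[OF Gg] by fastforce
  then show "coboundary K d G dG (-1) t n x \<in> carrier (G (n - 0))"
    unfolding d1_eq[OF t x] diff_0_right
    by (intro monoid.m_closed[OF Gm] comm_monoid.finprod_closed[OF Hmon] dG_mem[OF tmem[OF t x], simplified])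
qed (simp add: cob_undef)

lemma d0_mem: "g \<in> cochains K G 0 \<Longrightarrow> coboundary K d G dG 0 g \<in> cochains K G 1"
proof (rule cochainsI)
  fix n x assume g: "g \<in> cochains K G 0" and x: "x \<in> K n"
  have "(\<lambda>y. g (n - 1) y [^]\<^bsub>G (n - 1)\<^esub> d n x y) \<in> K (n - 1) \<rightarrow> carrier (G (n - 1))"
    using gmem[OF g, of _ "n - 1"] group.int_pow_closed[OF Gg] by fastforce
  then show "coboundary K d G dG 0 g n x \<in> carrier (G (n - 1))"
    unfolding d0_eq[OF g x]
    by (intro monoid.m_closed[OF Gm] comm_monoid.finprod_closed[OF Hmon] group.inv_closed[OF Gg] dG_mem[OF gmem[OF g x]])
qed (simp add: cob_undef)

lemma Cmem_mult: "f \<in> cochains K G p \<Longrightarrow> h \<in> cochains K G p \<Longrightarrow> f \<otimes>\<^bsub>cochain_group K G p\<^esub> h \<in> cochains K G p"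
  using monoid.m_closed[OF group.is_monoid[OF C_g]] by fastforce

lemma d1_hom: "coboundary K d G dG (-1) \<in> hom (cochain_group K G (-1)) (cochain_group K G 0)"
proof (rule homI)
  fix s t assume s: "s \<in> carrier (cochain_group K G (-1))" and t: "t \<in> carrier (cochain_group K G (-1))"
  show "coboundary K d G dG (-1) (s \<otimes>\<^bsub>cochain_group K G (-1)\<^esub> t) =
        coboundary K d G dG (-1) s \<otimes>\<^bsub>cochain_group K G 0\<^esub> coboundary K d G dG (-1) t"
  proof (intro ext)
    fix n x
    show "coboundary K d G dG (-1) (s \<otimes>\<^bsub>cochain_group K G (-1)\<^esub> t) n x =
        (coboundary K d G dG (-1) s \<otimes>\<^bsub>cochain_group K G 0\<^esub> coboundary K d G dG (-1) t) n x"
    proof (cases "x \<in> K n")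
      case False then show ?thesis by (simp add: cob_undef)
    next
      case x: True
      interpret H: comm_group "G n" by (rule Gcg)
      have s': "s \<in> cochains K G (-1)" and t': "t \<in> cochains K G (-1)" using s t by auto
      have st: "s \<otimes>\<^bsub>cochain_group K G (-1)\<^esub> t \<in> cochains K G (-1)" using Cmem_mult s' t' by blast
      have a: "(\<lambda>y. s (n - 1) y [^]\<^bsub>G n\<^esub> d n x y) \<in> K (n - 1) \<rightarrow> carrier (G n)"
        "(\<lambda>y. t (n - 1) y [^]\<^bsub>G n\<^esub> d n x y) \<in> K (n - 1) \<rightarrow> carrier (G n)"
        using tmem[OF s', of _ "n - 1"] tmem[OF t', of _ "n - 1"] by fastforce+
      have "(\<Otimes>\<^bsub>G n\<^esub> y\<in>K (n - 1). (s \<otimes>\<^bsub>cochain_group K G (-1)\<^esub> t) (n - 1) y [^]\<^bsub>G n\<^esub> d n x y)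
         = (\<Otimes>\<^bsub>G n\<^esub> y\<in>K (n - 1). s (n - 1) y [^]\<^bsub>G n\<^esub> d n x y \<otimes>\<^bsub>G n\<^esub> t (n - 1) y [^]\<^bsub>G n\<^esub> d n x y)"
        using tmem[OF s', of _ "n - 1"] tmem[OF t', of _ "n - 1"]
        by (intro H.finprod_cong') (auto simp: H.int_pow_distrib)
      also have "\<dots> = (\<Otimes>\<^bsub>G n\<^esub> y\<in>K (n - 1). s (n - 1) y [^]\<^bsub>G n\<^esub> d n x y) \<otimes>\<^bsub>G n\<^esub>
           (\<Otimes>\<^bsub>G n\<^esub> y\<in>K (n - 1). t (n - 1) y [^]\<^bsub>G n\<^esub> d n x y)"
        using a by simp
      finally have e1: "(\<Otimes>\<^bsub>G n\<^esub> y\<in>K (n - 1). (s \<otimes>\<^bsub>cochain_group K G (-1)\<^esub> t) (n - 1) y [^]\<^bsub>G n\<^esub> d n x y) = 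
           (\<Otimes>\<^bsub>G n\<^esub> y\<in>K (n - 1). s (n - 1) y [^]\<^bsub>G n\<^esub> d n x y) \<otimes>\<^bsub>G n\<^esub>
           (\<Otimes>\<^bsub>G n\<^esub> y\<in>K (n - 1). t (n - 1) y [^]\<^bsub>G n\<^esub> d n x y)" .
      have e2: "dG (n + 1) ((s \<otimes>\<^bsub>cochain_group K G (-1)\<^esub> t) n x) = dG (n + 1) (s n x) \<otimes>\<^bsub>G n\<^esub> dG (n + 1) (t n x)"
        using dG_mult[OF tmem[OF s' x] tmem[OF t' x]] x by simp
      have c: "dG (n + 1) (s n x) \<in> carrier (G n)" "dG (n + 1) (t n x) \<in> carrier (G n)"
        using dG_mem[OF tmem[OF s' x]] dG_mem[OF tmem[OF t' x]] by simp_all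
      show ?thesis
        unfolding d1_eq[OF st x] e1 e2 using x d1_eq[OF s' x] d1_eq[OF t' x] a c
        by (simp add: H.m_ac H.finprod_closed)
    qed
  qed
qed (auto intro: d1_mem)

lemma d0_hom: "coboundary K d G dG 0 \<in> hom (cochain_group K G 0) (cochain_group K G 1)"
proof (rule homI)
  fix s t assume s: "s \<in> carrier (cochain_group K G 0)" and t: "t \<in> carrier (cochain_group K G 0)"
  show "coboundary K d G dG 0 (s \<otimes>\<^bsub>cochain_group K G 0\<^esub> t) =
        coboundary K d G dG 0 s \<otimes>\<^bsub>cochain_group K G 1\<^esub> coboundary K d G dG 0 t"
  proof (intro ext)
    fix n x
    show "coboundary K d G dG 0 (s \<otimes>\<^bsub>cochain_group K G 0\<^esub> t) n x =
        (coboundary K d G dG 0 s \<otimes>\<^bsub>cochain_group K G 1\<^esub> coboundary K d G dG 0 t) n x"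
    proof (cases "x \<in> K n")
      case False then show ?thesis by (simp add: cob_undef)
    next
      case x: True
      interpret H: comm_group "G (n - 1)" by (rule Gcg)
      have s': "s \<in> cochains K G 0" and t': "t \<in> cochains K G 0" using s t by auto
      have st: "s \<otimes>\<^bsub>cochain_group K G 0\<^esub> t \<in> cochains K G 0" using Cmem_mult s' t' by blast
      have a: "(\<lambda>y. s (n - 1) y [^]\<^bsub>G (n - 1)\<^esub> d n x y) \<in> K (n - 1) \<rightarrow> carrier (G (n - 1))"
        "(\<lambda>y. t (n - 1) y [^]\<^bsub>G (n - 1)\<^esub> d n x y) \<in> K (n - 1) \<rightarrow> carrier (G (n - 1))"
        using gmem[OF s', of _ "n - 1"] gmem[OF t', of _ "n - 1"] by fastforce+
      have "(\<Otimes>\<^bsub>G (n - 1)\<^esub> y\<in>K (n - 1). (s \<otimes>\<^bsub>cochain_group K G 0\<^esub> t) (n - 1) y [^]\<^bsub>G (n - 1)\<^esub> d n x y)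
         = (\<Otimes>\<^bsub>G (n - 1)\<^esub> y\<in>K (n - 1). s (n - 1) y [^]\<^bsub>G (n - 1)\<^esub> d n x y \<otimes>\<^bsub>G (n - 1)\<^esub> t (n - 1) y [^]\<^bsub>G (n - 1)\<^esub> d n x y)"
        using gmem[OF s', of _ "n - 1"] gmem[OF t', of _ "n - 1"]
        by (intro H.finprod_cong') (auto simp: H.int_pow_distrib)
      also have "\<dots> = (\<Otimes>\<^bsub>G (n - 1)\<^esub> y\<in>K (n - 1). s (n - 1) y [^]\<^bsub>G (n - 1)\<^esub> d n x y) \<otimes>\<^bsub>G (n - 1)\<^esub>
           (\<Otimes>\<^bsub>G (n - 1)\<^esub> y\<in>K (n - 1). t (n - 1) y [^]\<^bsub>G (n - 1)\<^esub> d n x y)"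
        using a by simp
      finally have e1: "(\<Otimes>\<^bsub>G (n - 1)\<^esub> y\<in>K (n - 1). (s \<otimes>\<^bsub>cochain_group K G 0\<^esub> t) (n - 1) y [^]\<^bsub>G (n - 1)\<^esub> d n x y) = 
           (\<Otimes>\<^bsub>G (n - 1)\<^esub> y\<in>K (n - 1). s (n - 1) y [^]\<^bsub>G (n - 1)\<^esub> d n x y) \<otimes>\<^bsub>G (n - 1)\<^esub>
           (\<Otimes>\<^bsub>G (n - 1)\<^esub> y\<in>K (n - 1). t (n - 1) y [^]\<^bsub>G (n - 1)\<^esub> d n x y)" .
      have c: "dG n (s n x) \<in> carrier (G (n - 1))" "dG n (t n x) \<in> carrier (G (n - 1))"
        using dG_mem[OF gmem[OF s' x]] dG_mem[OF gmem[OF t' x]] by simp_all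
      have e2: "inv\<^bsub>G (n - 1)\<^esub> dG n ((s \<otimes>\<^bsub>cochain_group K G 0\<^esub> t) n x) = inv\<^bsub>G (n - 1)\<^esub> dG n (s n x) \<otimes>\<^bsub>G (n - 1)\<^esub> inv\<^bsub>G (n - 1)\<^esub> dG n (t n x)"
        using dG_mult[OF gmem[OF s' x] gmem[OF t' x]] x c by (simp add: H.inv_mult)
      show ?thesis
        unfolding d0_eq[OF st x] e1 e2 using x d0_eq[OF s' x] d0_eq[OF t' x] a c
        by (simp add: H.m_ac H.finprod_closed)
    qed
  qed
qed (auto intro: d0_mem)

lemma d0d1: assumes t: "t \<in> cochains K G (-1)"
  shows "coboundary K d G dG 0 (coboundary K d G dG (-1) t) = \<one>\<^bsub>cochain_group K G 1\<^esub>"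
proof (intro ext)
  fix n x
  show "coboundary K d G dG 0 (coboundary K d G dG (-1) t) n x = \<one>\<^bsub>cochain_group K G 1\<^esub> n x"
  proof (cases "x \<in> K n")
    case False then show ?thesis by (simp add: cob_undef)
  next
    case x: True
    interpret H: comm_group "G (n - 1)" by (rule Gcg)
    interpret Gn: comm_group "G n" by (rule Gcg)
    define e where "e = d n x"
    define T where "T = t (n - 2)"
    define P where "P = (\<lambda>y. \<Otimes>\<^bsub>G (n - 1)\<^esub> z\<in>K (n - 2). T z [^]\<^bsub>G (n - 1)\<^esub> d (n - 1) y z)"
    define Q where "Q = (\<lambda>y. dG n (t (n - 1) y))"
    have i1: "n - 1 - 1 = n - 2" "n - 1 + 1 = n" "n - 2 + 1 = n - 1" "n + 1 - 1 = n" "n + 1 - 2 = n - 1" by simp_all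
    have Tc: "\<And>z. z \<in> K (n - 2) \<Longrightarrow> T z \<in> carrier (G (n - 1))"
      unfolding T_def using tmem[OF t, of _ "n - 2"] i1 by simp
    have Pc: "\<And>y. P y \<in> carrier (G (n - 1))"
      unfolding P_def using Tc by (intro H.finprod_closed) auto
    have tc: "\<And>y. y \<in> K (n - 1) \<Longrightarrow> t (n - 1) y \<in> carrier (G n)"
      using tmem[OF t, of _ "n - 1"] by simp
    have Qc: "\<And>y. y \<in> K (n - 1) \<Longrightarrow> Q y \<in> carrier (G (n - 1))"
      unfolding Q_def using dG_mem tc by blast
    have d1y: "\<And>y. y \<in> K (n - 1) \<Longrightarrow> coboundary K d G dG (-1) t (n - 1) y = P y \<otimes>\<^bsub>G (n - 1)\<^esub> Q y"
      using d1_eq[OF t] unfolding P_def Q_def T_def by (simp add: i1)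
    have S1: "(\<Otimes>\<^bsub>G (n - 1)\<^esub> y\<in>K (n - 1). coboundary K d G dG (-1) t (n - 1) y [^]\<^bsub>G (n - 1)\<^esub> e y)
        = (\<Otimes>\<^bsub>G (n - 1)\<^esub> y\<in>K (n - 1). P y [^]\<^bsub>G (n - 1)\<^esub> e y) \<otimes>\<^bsub>G (n - 1)\<^esub>
          (\<Otimes>\<^bsub>G (n - 1)\<^esub> y\<in>K (n - 1). Q y [^]\<^bsub>G (n - 1)\<^esub> e y)"
    proof -
      have "(\<Otimes>\<^bsub>G (n - 1)\<^esub> y\<in>K (n - 1). coboundary K d G dG (-1) t (n - 1) y [^]\<^bsub>G (n - 1)\<^esub> e y)
        = (\<Otimes>\<^bsub>G (n - 1)\<^esub> y\<in>K (n - 1). P y [^]\<^bsub>G (n - 1)\<^esub> e y \<otimes>\<^bsub>G (n - 1)\<^esub> Q y [^]\<^bsub>G (n - 1)\<^esub> e y)"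
        using Pc Qc d1y by (intro H.finprod_cong') (auto simp: H.int_pow_distrib)
      also have "\<dots> = (\<Otimes>\<^bsub>G (n - 1)\<^esub> y\<in>K (n - 1). P y [^]\<^bsub>G (n - 1)\<^esub> e y) \<otimes>\<^bsub>G (n - 1)\<^esub>
          (\<Otimes>\<^bsub>G (n - 1)\<^esub> y\<in>K (n - 1). Q y [^]\<^bsub>G (n - 1)\<^esub> e y)"
        using Pc Qc by (intro H.finprod_multf) auto
      finally show ?thesis .
    qed
    have S2: "(\<Otimes>\<^bsub>G (n - 1)\<^esub> y\<in>K (n - 1). P y [^]\<^bsub>G (n - 1)\<^esub> e y) = \<one>\<^bsub>G (n - 1)\<^esub>"
    proof -
      have "(\<Otimes>\<^bsub>G (n - 1)\<^esub> y\<in>K (n - 1). P y [^]\<^bsub>G (n - 1)\<^esub> e y)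
          = (\<Otimes>\<^bsub>G (n - 1)\<^esub> y\<in>K (n - 1). \<Otimes>\<^bsub>G (n - 1)\<^esub> z\<in>K (n - 2). T z [^]\<^bsub>G (n - 1)\<^esub> (d (n - 1) y z * e y))"
        unfolding P_def using Tc
        by (intro H.finprod_cong') (auto simp: H.finprod_int_pow H.int_pow_pow intro!: H.finprod_closed H.finprod_cong')
      also have "\<dots> = (\<Otimes>\<^bsub>G (n - 1)\<^esub> z\<in>K (n - 2). \<Otimes>\<^bsub>G (n - 1)\<^esub> y\<in>K (n - 1). T z [^]\<^bsub>G (n - 1)\<^esub> (d (n - 1) y z * e y))"
        using Tc finK by (intro H.finprod_swap) auto
      also have "\<dots> = (\<Otimes>\<^bsub>G (n - 1)\<^esub> z\<in>K (n - 2). T z [^]\<^bsub>G (n - 1)\<^esub> (\<Sum>y\<in>K (n - 1). d (n - 1) y z * e y))"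
        using Tc by (intro H.finprod_cong') (auto simp: H.finprod_pow_sum)
      also have "\<dots> = (\<Otimes>\<^bsub>G (n - 1)\<^esub> z\<in>K (n - 2). \<one>\<^bsub>G (n - 1)\<^esub>)"
      proof (intro H.finprod_cong')
        fix z assume z: "z \<in> K (n - 2)"
        have "(\<Sum>y\<in>K (n - 1). d (n - 1) y z * e y) = 0"
          using dd[OF x z] unfolding e_def by (simp add: mult.commute)
        then show "T z [^]\<^bsub>G (n - 1)\<^esub> (\<Sum>y\<in>K (n - 1). d (n - 1) y z * e y) = \<one>\<^bsub>G (n - 1)\<^esub>" by simp
      qed auto
      finally show ?thesis by simp
    qed
    have S3: "dG n (coboundary K d G dG (-1) t n x) = (\<Otimes>\<^bsub>G (n - 1)\<^esub> y\<in>K (n - 1). Q y [^]\<^bsub>G (n - 1)\<^esub> e y)"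
    proof -
      have a: "(\<lambda>y. t (n - 1) y [^]\<^bsub>G n\<^esub> e y) \<in> K (n - 1) \<rightarrow> carrier (G n)" using tc by auto
      have tnx: "t n x \<in> carrier (G (n + 1))" using tmem[OF t x] .
      have "dG n (coboundary K d G dG (-1) t n x) = dG n (\<Otimes>\<^bsub>G n\<^esub> y\<in>K (n - 1). t (n - 1) y [^]\<^bsub>G n\<^esub> e y)
            \<otimes>\<^bsub>G (n - 1)\<^esub> dG n (dG (n + 1) (t n x))"
        unfolding d1_eq[OF t x] e_def using a dG_mem[OF tnx] by (intro dG_mult) (auto intro: Gn.finprod_closed simp: e_def)
      also have "dG n (dG (n + 1) (t n x)) = \<one>\<^bsub>G (n - 1)\<^esub>" using dGdG[OF tnx] by (simp add: i1)
      also have "dG n (\<Otimes>\<^bsub>G n\<^esub> y\<in>K (n - 1). t (n - 1) y [^]\<^bsub>G n\<^esub> e y)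
          = (\<Otimes>\<^bsub>G (n - 1)\<^esub> y\<in>K (n - 1). dG n (t (n - 1) y [^]\<^bsub>G n\<^esub> e y))"
        using a finK by (intro hom_finprod_gen[OF Gcg Gcg dGhom])
      also have "\<dots> = (\<Otimes>\<^bsub>G (n - 1)\<^esub> y\<in>K (n - 1). Q y [^]\<^bsub>G (n - 1)\<^esub> e y)"
        unfolding Q_def using tc by (intro H.finprod_cong') (auto simp: hom_int_pow[OF dGhom _ Gg Gg] dG_mem)
      finally show ?thesis using Qc by (simp add: H.finprod_closed)
    qed
    have X: "(\<Otimes>\<^bsub>G (n - 1)\<^esub> y\<in>K (n - 1). Q y [^]\<^bsub>G (n - 1)\<^esub> e y) \<in> carrier (G (n - 1))"
      using Qc by (intro H.finprod_closed) auto
    show ?thesis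
      unfolding d0_eq[OF d1_mem[OF t] x] e_def[symmetric] S1 S2 S3 using x X by simp
  qed
qed

end

lemma unit_root: assumes "cmod z = 1" "N > 0" shows "\<exists>w. cmod w = 1 \<and> w ^ N = z"
proof (intro exI conjI)
  have z0: "z \<noteq> 0" using assms by auto
  show "cmod (cis (Arg z / real N)) = 1" by simp
  have "cis (Arg z / real N) ^ N = cis (Arg z)" using assms by (simp add: DeMoivre)
  also have "\<dots> = z" using cis_Arg[OF z0] assms by (simp add: sgn_eq)
  finally show "cis (Arg z / real N) ^ N = z" .
qed

definition pchar :: "('a,'c) monoid_scheme \<Rightarrow> 'a set \<Rightarrow> ('a \<Rightarrow> complex) \<Rightarrow> bool" where
  "pchar A H \<psi> \<longleftrightarrow> (\<forall>x\<in>H. cmod (\<psi> x) = 1) \<and> (\<forall>x\<in>H. \<forall>y\<in>H. \<psi> (x \<otimes>\<^bsub>A\<^esub> y) = \<psi> x * \<psi> y)"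

context comm_group begin

lemma pchar_one: assumes "subgroup H G" "pchar G H \<psi>" shows "\<psi> \<one> = 1"
proof -
  have o: "\<one> \<in> H" using assms subgroup.one_closed by blast
  have "\<psi> (\<one> \<otimes> \<one>) = \<psi> \<one> * \<psi> \<one>" using assms(2) o unfolding pchar_def by blast
  then have "\<psi> \<one> = \<psi> \<one> * \<psi> \<one>" by simp
  moreover have "\<psi> \<one> \<noteq> 0" using assms(2) o unfolding pchar_def by force
  ultimately show ?thesis by simp
qed

lemma sub_pow_closed: "subgroup H G \<Longrightarrow> x \<in> H \<Longrightarrow> x [^] (q::nat) \<in> H"
  by (induct q) (auto intro: subgroup.one_closed subgroup.m_closed)

lemma pchar_pow: assumes "subgroup H G" "pchar G H \<psi>" "x \<in> H" shows "\<psi> (x [^] (q::nat)) = \<psi> x ^ q"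
proof (induct q)
  case 0 then show ?case using pchar_one[OF assms(1,2)] by simp
next
  case (Suc q)
  have "\<psi> (x [^] Suc q) = \<psi> (x [^] q \<otimes> x)" by simp
  also have "\<dots> = \<psi> (x [^] q) * \<psi> x" using assms sub_pow_closed unfolding pchar_def by blast
  finally show ?case using Suc by simp
qed

lemma ext_step:
  assumes fin: "finite (carrier G)" and H: "subgroup H G" and a: "a \<in> carrier G" "a \<notin> H"
    and psi: "pchar G H \<psi>"
  shows "\<exists>H' \<psi>'. subgroup H' G \<and> H \<subseteq> H' \<and> a \<in> H' \<and> pchar G H' \<psi>' \<and> (\<forall>x\<in>H. \<psi>' x = \<psi> x)"
proof -
  have Hc: "\<And>x. x \<in> H \<Longrightarrow> x \<in> carrier G" by (rule subgroup.mem_carrier[OF H])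
  have psim: "\<And>x y. x \<in> H \<Longrightarrow> y \<in> H \<Longrightarrow> \<psi> (x \<otimes> y) = \<psi> x * \<psi> y"
    using psi unfolding pchar_def by blast
  have psin: "\<And>x. x \<in> H \<Longrightarrow> cmod (\<psi> x) = 1" using psi unfolding pchar_def by blast
  define S where "S = {k::nat. 0 < k \<and> a [^] k \<in> H}"
  have "ord a \<in> S" unfolding S_def using ord_ge_1[OF fin a(1)] pow_ord_eq_1[OF a(1)] subgroup.one_closed[OF H] by auto
  define N where "N = (LEAST k. k \<in> S)"
  have NS: "N \<in> S" unfolding N_def by (rule LeastI) fact
  then have N0: "N > 0" and aN: "a [^] N \<in> H" unfolding S_def by auto
  have Nmin: "\<And>k. 0 < k \<Longrightarrow> k < N \<Longrightarrow> a [^] k \<notin> H"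
    using not_less_Least unfolding N_def S_def by blast
  have Ndvd: "N dvd j" if j: "a [^] j \<in> H" for j
  proof -
    define q where "q = j div N"
    define r where "r = j mod N"
    have jqr: "j = N * q + r" unfolding q_def r_def by simp
    have "a [^] j = (a [^] N) [^] q \<otimes> a [^] r" unfolding jqr using a by (simp add: nat_pow_mult nat_pow_pow)
    then have "a [^] r = inv ((a [^] N) [^] q) \<otimes> a [^] j" using inv_solve_left[of "a [^] r" "(a [^] N) [^] q" "a [^] j"] a by simp
    also have "\<dots> \<in> H"
    proof -
      have "(a [^] N) [^] q \<in> H" using H aN by (rule sub_pow_closed)
      then have "inv ((a [^] N) [^] q) \<in> H" by (rule subgroup.m_inv_closed[OF H])
      then show ?thesis using j by (rule subgroup.m_closed[OF H])
    qed
    finally have arH: "a [^] r \<in> H" .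
    have rN: "r < N" unfolding r_def using N0 by simp
    have "r = 0"
    proof (rule ccontr)
      assume "r \<noteq> 0" then show False using Nmin[of r] arH rN by simp
    qed
    then show ?thesis unfolding r_def by auto
  qed
  obtain w where w1: "cmod w = 1" and wN: "w ^ N = \<psi> (a [^] N)"
    using unit_root[OF psin[OF aN] N0] by blast
  have key0: "\<psi> h * w ^ k = \<psi> h' * w ^ k'"
    if h: "h \<in> H" "h' \<in> H" and e: "h \<otimes> a [^] k = h' \<otimes> a [^] k'" and kk: "k' \<le> k" for h h' k k'
  proof -
    define j where "j = k - k'"
    have kj: "k = j + k'" unfolding j_def using kk by simp
    have "(h \<otimes> a [^] j) \<otimes> a [^] k' = h' \<otimes> a [^] k'" using e a Hc h unfolding kj by (simp add: nat_pow_mult m_assoc)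
    then have hh: "h \<otimes> a [^] j = h'" using a Hc h using r_cancel[of "a [^] k'" "h \<otimes> a [^] j" h'] by simp
    then have "a [^] j = inv h \<otimes> h'" using a Hc h using inv_solve_left[of "a [^] j" h h'] by simp
    then have ajH: "a [^] j \<in> H" using subgroup.m_closed[OF H subgroup.m_inv_closed[OF H h(1)] h(2)] by simp
    obtain q where jq: "j = N * q" using Ndvd[OF ajH] by blast
    have "\<psi> (a [^] j) = \<psi> ((a [^] N) [^] q)" using a by (simp add: jq nat_pow_pow)
    also have "\<dots> = w ^ j" using pchar_pow[OF H psi aN] wN by (simp add: jq power_mult)
    finally have "\<psi> h' = \<psi> h * w ^ j" using hh psim[OF h(1) ajH] by simp
    then show ?thesis unfolding kj by (simp add: power_add)
  qed
  have key: "\<psi> h * w ^ k = \<psi> h' * w ^ k'"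
    if h: "h \<in> H" "h' \<in> H" and e: "h \<otimes> a [^] k = h' \<otimes> a [^] k'" for h h' k k'
    using key0[OF h e] key0[OF h(2,1) e[symmetric]] by (cases "k' \<le> k") auto
  define H' where "H' = {y. \<exists>h\<in>H. \<exists>k::nat. y = h \<otimes> a [^] k}"
  define \<psi>' where "\<psi>' = (\<lambda>y. let p = (SOME p. fst p \<in> H \<and> y = fst p \<otimes> a [^] (snd p :: nat)) in \<psi> (fst p) * w ^ snd p)"
  have rep: "\<psi>' (h \<otimes> a [^] k) = \<psi> h * w ^ k" if h: "h \<in> H" for h k
  proof -
    define p where "p = (SOME p. fst p \<in> H \<and> h \<otimes> a [^] k = fst p \<otimes> a [^] (snd p :: nat))"
    have "fst p \<in> H \<and> h \<otimes> a [^] k = fst p \<otimes> a [^] (snd p :: nat)"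
      unfolding p_def by (rule someI[of _ "(h,k)"]) (simp add: h)
    then show ?thesis unfolding \<psi>'_def p_def[symmetric] Let_def using key[of "fst p" h "snd p" k] h by simp
  qed
  have invak: "inv (a [^] k) = a [^] (ord a * k - k)" for k :: nat
  proof -
    have "a [^] (ord a * k - k) \<otimes> a [^] k = a [^] (ord a * k)"
      using ord_ge_1[OF fin a(1)] a by (simp add: nat_pow_mult)
    also have "\<dots> = (a [^] ord a) [^] k" by (rule nat_pow_pow[symmetric, OF a(1)])
    also have "\<dots> = \<one>" using a by simp
    finally show ?thesis using a by (intro inv_equality) auto
  qed
  have sub: "subgroup H' G"
  proof (rule subgroupI)
    show "H' \<subseteq> carrier G" unfolding H'_def using Hc a by auto
    have "\<one> = \<one> \<otimes> a [^] (0::nat)" by simp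
    then show "H' \<noteq> {}" unfolding H'_def using subgroup.one_closed[OF H] by blast
  next
    fix y assume "y \<in> H'"
    then obtain h and k :: nat where h: "h \<in> H" and y: "y = h \<otimes> a [^] k" unfolding H'_def by blast
    have "inv y = inv h \<otimes> inv (a [^] k)" using h Hc a by (simp add: y inv_mult)
    also have "\<dots> = inv h \<otimes> a [^] (ord a * k - k)" by (simp only: invak)
    finally show "inv y \<in> H'" unfolding H'_def using subgroup.m_inv_closed[OF H h] by blast
  next
    fix y z assume "y \<in> H'" "z \<in> H'"
    then obtain h h' and k k' :: nat where h: "h \<in> H" "h' \<in> H" and y: "y = h \<otimes> a [^] k" and z: "z = h' \<otimes> a [^] k'"
      unfolding H'_def by blast
    have "y \<otimes> z = (h \<otimes> h') \<otimes> a [^] (k + k')" using h Hc a by (simp add: y z nat_pow_mult m_ac add.commute)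
    then show "y \<otimes> z \<in> H'" unfolding H'_def using subgroup.m_closed[OF H h] by blast
  qed
  have pc: "pchar G H' \<psi>'"
    unfolding pchar_def
  proof (intro conjI ballI)
    fix y assume "y \<in> H'"
    then obtain h and k :: nat where h: "h \<in> H" and y: "y = h \<otimes> a [^] k" unfolding H'_def by blast
    show "cmod (\<psi>' y) = 1" unfolding y rep[OF h] using psin[OF h] w1 by (simp add: norm_mult norm_power)
  next
    fix y z assume "y \<in> H'" "z \<in> H'"
    then obtain h h' and k k' :: nat where h: "h \<in> H" "h' \<in> H" and y: "y = h \<otimes> a [^] k" and z: "z = h' \<otimes> a [^] k'"
      unfolding H'_def by blast
    have yz: "y \<otimes> z = (h \<otimes> h') \<otimes> a [^] (k + k')" using h Hc a by (simp add: y z nat_pow_mult m_ac add.commute)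
    have hh: "h \<otimes> h' \<in> H" using subgroup.m_closed[OF H h] .
    have "\<psi>' (y \<otimes> z) = \<psi> (h \<otimes> h') * w ^ (k + k')" unfolding yz by (rule rep[OF hh])
    also have "\<dots> = (\<psi> h * w ^ k) * (\<psi> h' * w ^ k')" using psim[OF h] by (simp add: power_add)
    also have "\<dots> = \<psi>' y * \<psi>' z" unfolding y z rep[OF h(1)] rep[OF h(2)] ..
    finally show "\<psi>' (y \<otimes> z) = \<psi>' y * \<psi>' z" .
  qed
  have HH: "H \<subseteq> H'"
  proof
    fix x assume x: "x \<in> H"
    then have "x = x \<otimes> a [^] (0::nat)" using Hc by simp
    then show "x \<in> H'" unfolding H'_def using x by blast
  qed
  have "a = \<one> \<otimes> a [^] (1::nat)" using a by simp
  then have "a \<in> H'" unfolding H'_def using subgroup.one_closed[OF H] by blast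
  moreover have "\<forall>x\<in>H. \<psi>' x = \<psi> x" proof
    fix x assume x: "x \<in> H" show "\<psi>' x = \<psi> x" using rep[OF x, of 0] Hc[OF x] by simp
  qed
  ultimately show ?thesis using sub pc HH by blast
qed

lemma char_extend:
  assumes fin: "finite (carrier G)" and H: "subgroup H G" and psi: "pchar G H \<psi>"
  shows "\<exists>m. pchar G (carrier G) m \<and> (\<forall>x\<in>H. m x = \<psi> x)"
  using H psi
proof (induct "card (carrier G - H)" arbitrary: H \<psi> rule: less_induct)
  case less
  show ?case
  proof (cases "carrier G - H = {}")
    case True
    then have "H = carrier G" using subgroup.subset[OF less.prems(1)] by blast
    then show ?thesis using less.prems by blast
  next
    case False
    then obtain a where a: "a \<in> carrier G" "a \<notin> H" by blast
    obtain H' \<psi>' where s: "subgroup H' G" "H \<subseteq> H'" "a \<in> H'" "pchar G H' \<psi>'" "\<forall>x\<in>H. \<psi>' x = \<psi> x"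
      using ext_step[OF fin less.prems(1) a less.prems(2)] by blast
    have "carrier G - H' \<subset> carrier G - H" using s(2,3) a by blast
    then have lt: "card (carrier G - H') < card (carrier G - H)" using fin by (intro psubset_card_mono) auto
    obtain m where m: "pchar G (carrier G) m" "\<forall>x\<in>H'. m x = \<psi>' x" using less.hyps[OF lt s(1) s(4)] by blast
    have "\<forall>x\<in>H. m x = \<psi> x" using m(2) s(2,5) by auto
    then show ?thesis using m(1) by blast
  qed
qed

end

context cs begin

abbreviation "C0 \<equiv> cochain_group K G 0"
abbreviation "Cm \<equiv> cochain_group K G (-1)"
abbreviation "C1 \<equiv> cochain_group K G 1"
abbreviation "Z \<equiv> cocycles0 K d G dG"
abbreviation "B \<equiv> coboundaries0 K d G dG"
abbreviation "Zg \<equiv> C0\<lparr>carrier := Z\<rparr>"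
abbreviation "d1 \<equiv> coboundary K d G dG (-1)"

lemma gh1: "group_hom Cm C0 d1"
  using d1_hom C_g by (simp add: group_hom_def group_hom_axioms_def)
lemma gh0: "group_hom C0 C1 (coboundary K d G dG 0)"
  using d0_hom C_g by (simp add: group_hom_def group_hom_axioms_def)

lemma Z_kernel: "Z = kernel C0 C1 (coboundary K d G dG 0)"
  unfolding cocycles0_def kernel_def by simp

lemma B_img: "B = d1 ` carrier Cm"
  unfolding coboundaries0_def by simp

lemma subZ: "subgroup Z C0" unfolding Z_kernel by (rule group_hom.subgroup_kernel[OF gh0])
lemma subB: "subgroup B C0" unfolding B_img by (rule group_hom.img_is_subgroup[OF gh1])
lemma BZ: "B \<subseteq> Z"
  unfolding coboundaries0_def cocycles0_def using d0d1 d1_mem by auto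
lemma Zc: "Z \<subseteq> cochains K G 0" unfolding cocycles0_def by auto

lemma Zg_cg: "comm_group Zg"
proof -
  have "group Zg" using group.subgroup_imp_group[OF C_g subZ] .
  then show ?thesis
    by (rule group.group_comm_groupI) (use comm_monoid.m_comm[OF comm_group.axioms(1)[OF C_cg]] Zc in auto)
qed

lemma subBZ: "subgroup B Zg" using group.subgroup_incl[OF C_g subB subZ BZ] .
lemma normBZ: "B \<lhd> Zg" using comm_group.subgroup_imp_normal[OF Zg_cg subBZ] .

lemma rc: "B #>\<^bsub>Zg\<^esub> f = B #>\<^bsub>C0\<^esub> f" by (simp add: r_coset_def)

lemma H0_eq: "H0_group K d G dG = Zg Mod B" by (simp add: H0_group_def)

lemma H0_carrier: "carrier (H0_group K d G dG) = (\<lambda>f. B #>\<^bsub>C0\<^esub> f) ` Z"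
  unfolding H0_eq carrier_FactGroup rc by simp

lemma H0_mult: "f \<in> Z \<Longrightarrow> g \<in> Z \<Longrightarrow>
  (B #>\<^bsub>C0\<^esub> f) \<otimes>\<^bsub>H0_group K d G dG\<^esub> (B #>\<^bsub>C0\<^esub> g) = B #>\<^bsub>C0\<^esub> (f \<otimes>\<^bsub>C0\<^esub> g)"
  using normal.rcos_sum[OF normBZ, of f g] unfolding H0_eq rc by simp

lemma H0_group: "group (H0_group K d G dG)"
  unfolding H0_eq by (rule normal.factorgroup_is_group[OF normBZ])

lemma B_one: "\<one>\<^bsub>H0_group K d G dG\<^esub> = B" unfolding H0_eq by simp

lemma Brc_B: "b \<in> B \<Longrightarrow> B #>\<^bsub>C0\<^esub> b = B"
  using subgroup.rcos_const[OF subB C_g] by blast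

lemma in_rc: "f \<in> cochains K G 0 \<Longrightarrow> f \<in> B #>\<^bsub>C0\<^esub> f"
  using group.rcos_self[OF C_g _ subB] by simp

lemma rc_elem: "g \<in> B #>\<^bsub>C0\<^esub> f \<Longrightarrow> \<exists>b\<in>B. g = b \<otimes>\<^bsub>C0\<^esub> f"
  unfolding r_coset_def by auto

end

lemma U1_simps[simp]: "carrier U1 = {z. cmod z = 1}" "x \<otimes>\<^bsub>U1\<^esub> y = x * y" "\<one>\<^bsub>U1\<^esub> = 1"
  by (simp_all add: U1_def)

context cs begin

lemma kd_mult: "m \<in> ker_dual0 K d G dG \<Longrightarrow> x \<in> cochains K G 0 \<Longrightarrow> y \<in> cochains K G 0 \<Longrightarrow>
   m (x \<otimes>\<^bsub>C0\<^esub> y) = m x * m y"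
  unfolding ker_dual0_def characters_def hom_def by simp

lemma kd_norm: "m \<in> ker_dual0 K d G dG \<Longrightarrow> x \<in> cochains K G 0 \<Longrightarrow> cmod (m x) = 1"
  unfolding ker_dual0_def characters_def hom_def by auto

lemma kd_ext: "m \<in> ker_dual0 K d G dG \<Longrightarrow> x \<notin> cochains K G 0 \<Longrightarrow> m x = undefined"
  unfolding ker_dual0_def characters_def extensional_def by auto

lemma kd_B: "m \<in> ker_dual0 K d G dG \<Longrightarrow> b \<in> B \<Longrightarrow> m b = 1"
  unfolding ker_dual0_def coboundaries0_def by auto

lemma Bc: "B \<subseteq> cochains K G 0" using BZ Zc by blast

lemma kd_coset: assumes m: "m \<in> ker_dual0 K d G dG" and f: "f \<in> cochains K G 0" and g: "g \<in> B #>\<^bsub>C0\<^esub> f"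
  shows "m g = m f"
proof -
  obtain b where b: "b \<in> B" and gb: "g = b \<otimes>\<^bsub>C0\<^esub> f" using rc_elem[OF g] by blast
  have "m g = m b * m f" unfolding gb using kd_mult[OF m _ f] b Bc by blast
  then show ?thesis using kd_B[OF m b] by simp
qed

lemma rc_in_H0: "f \<in> Z \<Longrightarrow> B #>\<^bsub>C0\<^esub> f \<in> carrier (H0_group K d G dG)"
  unfolding H0_carrier by blast

lemma mbar_rc: assumes m: "m \<in> ker_dual0 K d G dG" and f: "f \<in> Z"
  shows "mbar K d G dG m (B #>\<^bsub>C0\<^esub> f) = m f"
proof -
  have fc: "f \<in> cochains K G 0" using f Zc by blast
  have "(SOME g. g \<in> B #>\<^bsub>C0\<^esub> f) \<in> B #>\<^bsub>C0\<^esub> f" by (rule someI[of _ f]) (rule in_rc[OF fc])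
  then show ?thesis unfolding mbar_def using rc_in_H0[OF f] kd_coset[OF m fc] by simp
qed

lemma H0_elem: "c \<in> carrier (H0_group K d G dG) \<Longrightarrow> \<exists>f\<in>Z. c = B #>\<^bsub>C0\<^esub> f"
  unfolding H0_carrier by blast

lemma mbar_char: assumes m: "m \<in> ker_dual0 K d G dG"
  shows "mbar K d G dG m \<in> characters (H0_group K d G dG)"
  unfolding characters_def
proof
  show "mbar K d G dG m \<in> extensional (carrier (H0_group K d G dG))" unfolding mbar_def by simp
  show "mbar K d G dG m \<in> hom (H0_group K d G dG) U1"
  proof (rule homI)
    fix c assume "c \<in> carrier (H0_group K d G dG)"
    then obtain f where f: "f \<in> Z" and c: "c = B #>\<^bsub>C0\<^esub> f" using H0_elem by blast
    show "mbar K d G dG m c \<in> carrier U1" using mbar_rc[OF m f] kd_norm[OF m] f Zc c by auto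
  next
    fix c c' assume "c \<in> carrier (H0_group K d G dG)" "c' \<in> carrier (H0_group K d G dG)"
    then obtain f f' where f: "f \<in> Z" "f' \<in> Z" and c: "c = B #>\<^bsub>C0\<^esub> f" "c' = B #>\<^bsub>C0\<^esub> f'" using H0_elem by metis
    have ff: "f \<otimes>\<^bsub>C0\<^esub> f' \<in> Z" using subgroup.m_closed[OF subZ f] .
    show "mbar K d G dG m (c \<otimes>\<^bsub>H0_group K d G dG\<^esub> c') = mbar K d G dG m c \<otimes>\<^bsub>U1\<^esub> mbar K d G dG m c'"
      unfolding c H0_mult[OF f] mbar_rc[OF m ff] mbar_rc[OF m f(1)] mbar_rc[OF m f(2)]
      using kd_mult[OF m] f Zc by auto
  qed
qed

lemma wd: assumes m: "m \<in> ker_dual0 K d G dG" and f: "f \<in> Z" "f' \<in> Z"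
   and e: "B #>\<^bsub>C0\<^esub> f = B #>\<^bsub>C0\<^esub> f'" shows "m f = m f'"
  using mbar_rc[OF m f(1)] mbar_rc[OF m f(2)] e by simp

end

context cs begin

abbreviation "S0 \<equiv> cochains K G 0"
abbreviation "Tm \<equiv> cochains K G (-1)"

lemma d1c: "t \<in> Tm \<Longrightarrow> d1 t \<in> S0" using d1_mem by blast

lemma A0_out: "g \<notin> S0 \<Longrightarrow> A0 K d G dG \<psi> g = 0"
  unfolding A0_def Pop_def by simp

lemma term_eq: assumes m: "m \<in> ker_dual0 K d G dG" and f: "f \<in> S0" and g: "g \<in> S0" and t: "t \<in> Tm"
  shows "m g * Pop C0 (d1 t) (ket f) g = m f * Pop C0 (d1 t) (ket f) g"
proof (cases "g \<otimes>\<^bsub>C0\<^esub> inv\<^bsub>C0\<^esub> (d1 t) = f")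
  case True
  have "g = f \<otimes>\<^bsub>C0\<^esub> d1 t" using True group.inv_solve_right'[OF C_g[of 0], of f g "d1 t"] f g d1c[OF t] by simp
  then have "m g = m f * m (d1 t)" using kd_mult[OF m f d1c[OF t]] by simp
  also have "m (d1 t) = 1" using m t unfolding ker_dual0_def by auto
  finally show ?thesis by simp
next
  case False
  then show ?thesis unfolding Pop_def ket_def by simp
qed

lemma eig: assumes m: "m \<in> ker_dual0 K d G dG" and f: "f \<in> S0"
  shows "Qop S0 m (A0 K d G dG (ket f)) = (\<lambda>g. m f * A0 K d G dG (ket f) g)"
proof
  fix g
  show "Qop S0 m (A0 K d G dG (ket f)) g = m f * A0 K d G dG (ket f) g"
  proof (cases "g \<in> S0")
    case False then show ?thesis unfolding Qop_def using A0_out by simp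
  next
    case g: True
    have "m g * (\<Sum>t\<in>Tm. Pop C0 (d1 t) (ket f) g) = (\<Sum>t\<in>Tm. m g * Pop C0 (d1 t) (ket f) g)"
      by (simp add: sum_distrib_left)
    also have "\<dots> = (\<Sum>t\<in>Tm. m f * Pop C0 (d1 t) (ket f) g)"
      using term_eq[OF m f g] by (intro sum.cong) auto
    also have "\<dots> = m f * (\<Sum>t\<in>Tm. Pop C0 (d1 t) (ket f) g)"
      by (simp add: sum_distrib_left)
    finally show ?thesis unfolding Qop_def A0_def using g by (simp add: times_divide_eq_right)
  qed
qed

lemma A0_nz: assumes f: "f \<in> S0" shows "A0 K d G dG (ket f) f \<noteq> 0"
proof -
  have o: "\<one>\<^bsub>Cm\<^esub> \<in> Tm" using monoid.one_closed[OF group.is_monoid[OF C_g]] by simp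
  have d1o: "d1 \<one>\<^bsub>Cm\<^esub> = \<one>\<^bsub>C0\<^esub>" using group_hom.hom_one[OF gh1] .
  have nn: "\<And>t. 0 \<le> Re (Pop C0 (d1 t) (ket f) f)" unfolding Pop_def ket_def by simp
  have "1 \<le> Re (Pop C0 (d1 \<one>\<^bsub>Cm\<^esub>) (ket f) f)"
  proof -
    have "f \<otimes>\<^bsub>C0\<^esub> inv\<^bsub>C0\<^esub> \<one>\<^bsub>C0\<^esub> = f"
      by (simp only: monoid.inv_one[OF group.is_monoid[OF C_g]] monoid.r_one[OF group.is_monoid[OF C_g]] f C_carrier)
    then show ?thesis unfolding d1o Pop_def ket_def using f by simp
  qed
  also have "\<dots> \<le> (\<Sum>t\<in>Tm. Re (Pop C0 (d1 t) (ket f) f))"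
    using fin_cochains o nn by (intro member_le_sum) auto
  also have "\<dots> = Re (\<Sum>t\<in>Tm. Pop C0 (d1 t) (ket f) f)" by simp
  finally have r1: "1 \<le> Re (\<Sum>t\<in>Tm. Pop C0 (d1 t) (ket f) f)" .
  have s: "(\<Sum>t\<in>Tm. Pop C0 (d1 t) (ket f) f) \<noteq> 0"
  proof
    assume "(\<Sum>t\<in>Tm. Pop C0 (d1 t) (ket f) f) = 0"
    then have "Re (\<Sum>t\<in>Tm. Pop C0 (d1 t) (ket f) f) = 0" by (simp only: zero_complex.sel)
    then show False using r1 by simp
  qed
  have "card Tm \<noteq> 0" using fin_cochains o by auto
  then show ?thesis unfolding A0_def using s by simp
qed

lemma Qrel_iff: assumes m: "m \<in> ker_dual0 K d G dG" and m': "m' \<in> ker_dual0 K d G dG"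
  shows "(Qop S0 m, Qop S0 m') \<in> Qrel K d G dG \<longleftrightarrow> (\<forall>f\<in>Z. m f = m' f)"
proof
  assume r: "(Qop S0 m, Qop S0 m') \<in> Qrel K d G dG"
  show "\<forall>f\<in>Z. m f = m' f"
  proof
    fix f assume fZ: "f \<in> Z"
    then have f: "f \<in> S0" using Zc by blast
    obtain c where c: "Qop S0 m (A0 K d G dG (ket f)) = (\<lambda>g. c * A0 K d G dG (ket f) g)"
        "Qop S0 m' (A0 K d G dG (ket f)) = (\<lambda>g. c * A0 K d G dG (ket f) g)"
      using r fZ unfolding Qrel_def same_ground_eigenvalue_def by blast
    have "m f * A0 K d G dG (ket f) f = c * A0 K d G dG (ket f) f" using fun_cong[OF c(1), of f] eig[OF m f] by simp
    moreover have "m' f * A0 K d G dG (ket f) f = c * A0 K d G dG (ket f) f" using fun_cong[OF c(2), of f] eig[OF m' f] by simp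
    ultimately show "m f = m' f" using A0_nz[OF f] by simp
  qed
next
  assume a: "\<forall>f\<in>Z. m f = m' f"
  have "same_ground_eigenvalue K d G dG (Qop S0 m) (Qop S0 m')"
    unfolding same_ground_eigenvalue_def
  proof
    fix f assume fZ: "f \<in> Z"
    then have f: "f \<in> S0" using Zc by blast
    show "\<exists>c. Qop S0 m (A0 K d G dG (ket f)) = (\<lambda>g. c * A0 K d G dG (ket f) g) \<and>
              Qop S0 m' (A0 K d G dG (ket f)) = (\<lambda>g. c * A0 K d G dG (ket f) g)"
      using eig[OF m f] eig[OF m' f] a fZ by auto
  qed
  then show "(Qop S0 m, Qop S0 m') \<in> Qrel K d G dG" unfolding Qrel_def Qops_def using m m' by auto
qed

end

context cs begin

abbreviation "kd \<equiv> ker_dual0 K d G dG"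
abbreviation "H0 \<equiv> H0_group K d G dG"

lemma Qops_elem: "Q \<in> Qops K d G dG \<Longrightarrow> \<exists>m\<in>kd. Q = Qop S0 m"
  unfolding Qops_def by blast

lemma Qrel_sub: "(Q, Q') \<in> Qrel K d G dG \<Longrightarrow> Q \<in> Qops K d G dG \<and> Q' \<in> Qops K d G dG"
  unfolding Qrel_def by blast

lemma Qrel_equiv: "equiv (Qops K d G dG) (Qrel K d G dG)"
proof (rule equivI)
  show "Qrel K d G dG \<subseteq> Qops K d G dG \<times> Qops K d G dG" using Qrel_sub by auto
  show "refl_on (Qops K d G dG) (Qrel K d G dG)"
    unfolding refl_on_def
  proof
    fix Q assume "Q \<in> Qops K d G dG"
    then obtain m where m: "m \<in> kd" and Q: "Q = Qop S0 m" using Qops_elem by blast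
    show "(Q, Q) \<in> Qrel K d G dG" unfolding Q Qrel_iff[OF m m] by simp
  qed
  show "sym (Qrel K d G dG)"
  proof (rule symI)
    fix Q Q' assume r: "(Q, Q') \<in> Qrel K d G dG"
    obtain m where m1: "m \<in> kd" "Q = Qop S0 m" using Qrel_sub[OF r] Qops_elem by blast
    obtain m' where m2: "m' \<in> kd" "Q' = Qop S0 m'" using Qrel_sub[OF r] Qops_elem by blast
    have m: "m \<in> kd" "m' \<in> kd" and Q: "Q = Qop S0 m" "Q' = Qop S0 m'" using m1 m2 by auto
    show "(Q', Q) \<in> Qrel K d G dG" using r unfolding Q Qrel_iff[OF m] Qrel_iff[OF m(2,1)] by simp
  qed
  show "trans (Qrel K d G dG)"
  proof (rule transI)
    fix Q Q' Q'' assume r: "(Q, Q') \<in> Qrel K d G dG" and r': "(Q', Q'') \<in> Qrel K d G dG"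
    obtain m where m1: "m \<in> kd" "Q = Qop S0 m" using Qrel_sub[OF r] Qops_elem by blast
    obtain m' where m2: "m' \<in> kd" "Q' = Qop S0 m'" using Qrel_sub[OF r] Qops_elem by blast
    obtain m'' where m3: "m'' \<in> kd" "Q'' = Qop S0 m''" using Qrel_sub[OF r'] Qops_elem by blast
    have m: "m \<in> kd" "m' \<in> kd" "m'' \<in> kd" and Q: "Q = Qop S0 m" "Q' = Qop S0 m'" "Q'' = Qop S0 m''" using m1 m2 m3 by auto
    show "(Q, Q'') \<in> Qrel K d G dG" using r r' unfolding Q Qrel_iff[OF m(1,2)] Qrel_iff[OF m(2,3)] Qrel_iff[OF m(1,3)] by simp
  qed
qed

lemma mbar_eq_iff: assumes m: "m \<in> kd" and m': "m' \<in> kd"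
  shows "mbar K d G dG m = mbar K d G dG m' \<longleftrightarrow> (\<forall>f\<in>Z. m f = m' f)"
proof
  assume e: "mbar K d G dG m = mbar K d G dG m'"
  show "\<forall>f\<in>Z. m f = m' f"
  proof
    fix f assume f: "f \<in> Z"
    have "mbar K d G dG m (B #>\<^bsub>C0\<^esub> f) = mbar K d G dG m' (B #>\<^bsub>C0\<^esub> f)" by (simp add: e)
    then show "m f = m' f" unfolding mbar_rc[OF m f] mbar_rc[OF m' f] .
  qed
next
  assume a: "\<forall>f\<in>Z. m f = m' f"
  show "mbar K d G dG m = mbar K d G dG m'"
  proof
    fix c show "mbar K d G dG m c = mbar K d G dG m' c"
    proof (cases "c \<in> carrier H0")
      case True
      then obtain f where f: "f \<in> Z" and c: "c = B #>\<^bsub>C0\<^esub> f" using H0_elem by blast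
      show ?thesis unfolding c mbar_rc[OF m f] mbar_rc[OF m' f] using a f by simp
    next
      case False then show ?thesis unfolding mbar_def by simp
    qed
  qed
qed

lemma surj_char: assumes chi: "\<chi> \<in> characters H0" shows "\<exists>m\<in>kd. mbar K d G dG m = \<chi>"
proof -
  have chin: "\<And>c. c \<in> carrier H0 \<Longrightarrow> cmod (\<chi> c) = 1"
    using chi unfolding characters_def hom_def by auto
  have chim: "\<And>c c'. c \<in> carrier H0 \<Longrightarrow> c' \<in> carrier H0 \<Longrightarrow> \<chi> (c \<otimes>\<^bsub>H0\<^esub> c') = \<chi> c * \<chi> c'"
    using chi unfolding characters_def hom_def by auto
  have chie: "\<And>c. c \<notin> carrier H0 \<Longrightarrow> \<chi> c = undefined"
    using chi unfolding characters_def extensional_def by auto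
  have oc: "\<one>\<^bsub>H0\<^esub> \<in> carrier H0" using monoid.one_closed[OF group.is_monoid[OF H0_group]] .
  have "\<chi> (\<one>\<^bsub>H0\<^esub> \<otimes>\<^bsub>H0\<^esub> \<one>\<^bsub>H0\<^esub>) = \<chi> \<one>\<^bsub>H0\<^esub> * \<chi> \<one>\<^bsub>H0\<^esub>" using chim[OF oc oc] .
  then have "\<chi> \<one>\<^bsub>H0\<^esub> = \<chi> \<one>\<^bsub>H0\<^esub> * \<chi> \<one>\<^bsub>H0\<^esub>"
    using monoid.l_one[OF group.is_monoid[OF H0_group] oc] by simp
  moreover have "\<chi> \<one>\<^bsub>H0\<^esub> \<noteq> 0" using chin[OF oc] by auto
  ultimately have chi1: "\<chi> B = 1" unfolding B_one by simp
  define \<psi> where "\<psi> = (\<lambda>f. \<chi> (B #>\<^bsub>C0\<^esub> f))"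
  have pc: "pchar C0 Z \<psi>"
    unfolding pchar_def
  proof (intro conjI ballI)
    fix f assume "f \<in> Z" then show "cmod (\<psi> f) = 1" unfolding \<psi>_def by (intro chin rc_in_H0)
  next
    fix f g assume f: "f \<in> Z" and g: "g \<in> Z"
    show "\<psi> (f \<otimes>\<^bsub>C0\<^esub> g) = \<psi> f * \<psi> g"
      unfolding \<psi>_def H0_mult[OF f g, symmetric] using chim[OF rc_in_H0[OF f] rc_in_H0[OF g]] .
  qed
  obtain m0 where m0: "pchar C0 (carrier C0) m0" "\<forall>x\<in>Z. m0 x = \<psi> x"
    using comm_group.char_extend[OF C_cg[of 0] _ subZ pc] fin_cochains by auto
  define m where "m = restrict m0 S0"
  have m0n: "\<And>x. x \<in> S0 \<Longrightarrow> cmod (m0 x) = 1" and m0m: "\<And>x y. x \<in> S0 \<Longrightarrow> y \<in> S0 \<Longrightarrow> m0 (x \<otimes>\<^bsub>C0\<^esub> y) = m0 x * m0 y"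
    using m0(1) unfolding pchar_def by auto
  have mchar: "m \<in> characters C0"
    unfolding characters_def
  proof
    show "m \<in> extensional (carrier C0)" unfolding m_def by simp
    show "m \<in> hom C0 U1"
    proof (rule homI)
      fix x assume "x \<in> carrier C0" then show "m x \<in> carrier U1" unfolding m_def using m0n by simp
    next
      fix x y assume x: "x \<in> carrier C0" and y: "y \<in> carrier C0"
      have "x \<otimes>\<^bsub>C0\<^esub> y \<in> S0" using Cmem_mult x y by simp
      then show "m (x \<otimes>\<^bsub>C0\<^esub> y) = m x \<otimes>\<^bsub>U1\<^esub> m y" unfolding m_def using x y m0m by simp
    qed
  qed
  have mkd: "m \<in> kd"
    unfolding ker_dual0_def
  proof (intro CollectI conjI mchar ballI)
    fix t assume t: "t \<in> Tm"
    have b: "d1 t \<in> B" unfolding coboundaries0_def using t by simp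
    have "m (d1 t) = m0 (d1 t)" unfolding m_def using d1c[OF t] by simp
    also have "\<dots> = \<psi> (d1 t)" using m0(2) subsetD[OF BZ b] by simp
    also have "\<dots> = 1" unfolding \<psi>_def Brc_B[OF b] chi1 ..
    finally show "m (d1 t) = 1" .
  qed
  have "mbar K d G dG m = \<chi>"
  proof
    fix c show "mbar K d G dG m c = \<chi> c"
    proof (cases "c \<in> carrier H0")
      case True
      then obtain f where f: "f \<in> Z" and c: "c = B #>\<^bsub>C0\<^esub> f" using H0_elem by blast
      have "mbar K d G dG m c = m f" unfolding c mbar_rc[OF mkd f] ..
      also have "\<dots> = m0 f" unfolding m_def using f Zc by auto
      also have "\<dots> = \<chi> c" using m0(2) f unfolding \<psi>_def c by simp
      finally show ?thesis .
    next
      case False then show ?thesis unfolding mbar_def using chie by simp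
    qed
  qed
  then show ?thesis using mkd by blast
qed

lemma main:
  shows "(\<forall>m\<in>ker_dual0 K d G dG.
            (\<forall>f\<in>cocycles0 K d G dG. \<forall>f'\<in>cocycles0 K d G dG.
               coboundaries0 K d G dG #>\<^bsub>cochain_group K G 0\<^esub> f = coboundaries0 K d G dG #>\<^bsub>cochain_group K G 0\<^esub> f'
               \<longrightarrow> m f = m f')
            \<and> mbar K d G dG m \<in> characters (H0_group K d G dG))
       \<and> equiv (Qops K d G dG) (Qrel K d G dG)
       \<and> (\<forall>m\<in>ker_dual0 K d G dG. \<forall>m'\<in>ker_dual0 K d G dG.
            (Qop (cochains K G 0) m, Qop (cochains K G 0) m') \<in> Qrel K d G dG
            \<longrightarrow> mbar K d G dG m = mbar K d G dG m')
       \<and> (\<exists>\<Phi>. bij_betw \<Phi> (Qops K d G dG // Qrel K d G dG) (characters (H0_group K d G dG))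
              \<and> (\<forall>m\<in>ker_dual0 K d G dG. \<Phi> (Qrel K d G dG `` {Qop (cochains K G 0) m}) = mbar K d G dG m))"
proof (intro conjI ballI impI)
  fix m f f' assume "m \<in> kd" "f \<in> Z" "f' \<in> Z" "B #>\<^bsub>C0\<^esub> f = B #>\<^bsub>C0\<^esub> f'"
  then show "m f = m f'" by (rule wd)
next
  fix m assume "m \<in> kd" then show "mbar K d G dG m \<in> characters H0" by (rule mbar_char)
next
  show "equiv (Qops K d G dG) (Qrel K d G dG)" by (rule Qrel_equiv)
next
  fix m m' assume m: "m \<in> kd" and m': "m' \<in> kd" and r: "(Qop S0 m, Qop S0 m') \<in> Qrel K d G dG"
  have "\<forall>f\<in>Z. m f = m' f" using r unfolding Qrel_iff[OF m m'] .
  then show "mbar K d G dG m = mbar K d G dG m'" unfolding mbar_eq_iff[OF m m'] .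
next
  define Phi where "Phi = (%YY. mbar K d G dG (SOME m. m \<in> kd \<and> Qop S0 m \<in> YY))"
  have cls: "Phi (Qrel K d G dG `` {Qop S0 m}) = mbar K d G dG m" if m: "m \<in> kd" for m
  proof -
    define m' where "m' = (SOME m'. m' \<in> kd \<and> Qop S0 m' \<in> Qrel K d G dG `` {Qop S0 m})"
    have "(Qop S0 m, Qop S0 m) \<in> Qrel K d G dG" unfolding Qrel_iff[OF m m] by simp
    then have "m \<in> kd \<and> Qop S0 m \<in> Qrel K d G dG `` {Qop S0 m}" using m by blast
    then have "m' \<in> kd \<and> Qop S0 m' \<in> Qrel K d G dG `` {Qop S0 m}"
      unfolding m'_def by (rule someI[where P="\<lambda>m'. m' \<in> kd \<and> Qop S0 m' \<in> Qrel K d G dG `` {Qop S0 m}"])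
    then have m': "m' \<in> kd" and r: "(Qop S0 m, Qop S0 m') \<in> Qrel K d G dG" by blast+
    have "\<forall>f\<in>Z. m f = m' f" using r unfolding Qrel_iff[OF m m'] .
    then have "mbar K d G dG m = mbar K d G dG m'" unfolding mbar_eq_iff[OF m m'] .
    then have "mbar K d G dG m' = mbar K d G dG m" by (rule sym)
    then show ?thesis unfolding Phi_def m'_def .
  qed
  have qe: "\<exists>m\<in>kd. XX = Qrel K d G dG `` {Qop S0 m}" if "XX \<in> Qops K d G dG // Qrel K d G dG" for XX
    using that by (elim quotientE) (use Qops_elem in blast)
  have "bij_betw Phi (Qops K d G dG // Qrel K d G dG) (characters H0)"
    unfolding bij_betw_def
  proof (intro conjI)
    show "inj_on Phi (Qops K d G dG // Qrel K d G dG)"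
    proof (rule inj_onI)
      fix XX YY assume XX: "XX \<in> Qops K d G dG // Qrel K d G dG" and YY: "YY \<in> Qops K d G dG // Qrel K d G dG"
        and e: "Phi XX = Phi YY"
      obtain m where m: "m \<in> kd" and Xm: "XX = Qrel K d G dG `` {Qop S0 m}" using qe[OF XX] by blast
      obtain m' where m': "m' \<in> kd" and Ym: "YY = Qrel K d G dG `` {Qop S0 m'}" using qe[OF YY] by blast
      have "mbar K d G dG m = mbar K d G dG m'" using e cls[OF m] cls[OF m'] Xm Ym by simp
      then have "\<forall>f\<in>Z. m f = m' f" unfolding mbar_eq_iff[OF m m'] .
      then have "(Qop S0 m, Qop S0 m') \<in> Qrel K d G dG" unfolding Qrel_iff[OF m m'] .
      then show "XX = YY" unfolding Xm Ym by (rule equiv_class_eq[OF Qrel_equiv])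
    qed
    show "Phi ` (Qops K d G dG // Qrel K d G dG) = characters H0"
    proof
      show "Phi ` (Qops K d G dG // Qrel K d G dG) \<subseteq> characters H0"
      proof
        fix c assume "c \<in> Phi ` (Qops K d G dG // Qrel K d G dG)"
        then obtain XX where XX: "XX \<in> Qops K d G dG // Qrel K d G dG" and c: "c = Phi XX" by blast
        obtain m where m: "m \<in> kd" and Xm: "XX = Qrel K d G dG `` {Qop S0 m}" using qe[OF XX] by blast
        show "c \<in> characters H0" unfolding c Xm cls[OF m] by (rule mbar_char[OF m])
      qed
    next
      show "characters H0 \<subseteq> Phi ` (Qops K d G dG // Qrel K d G dG)"
      proof
        fix \<chi> assume "\<chi> \<in> characters H0"
        then obtain m where m: "m \<in> kd" and e: "mbar K d G dG m = \<chi>" using surj_char by blast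
        have "Qrel K d G dG `` {Qop S0 m} \<in> Qops K d G dG // Qrel K d G dG"
          using m unfolding Qops_def by (intro quotientI) blast
        moreover have "Phi (Qrel K d G dG `` {Qop S0 m}) = \<chi>" using cls[OF m] e by simp
        ultimately show "\<chi> \<in> Phi ` (Qops K d G dG // Qrel K d G dG)" by blast
      qed
    qed
  qed
  then show "\<exists>Phi. bij_betw Phi (Qops K d G dG // Qrel K d G dG) (characters H0)
              \<and> (\<forall>m\<in>kd. Phi (Qrel K d G dG `` {Qop S0 m}) = mbar K d G dG m)"
    using cls by blast
qed

end

theorem proposition7:
  fixes K :: "int \<Rightarrow> 'k set" and d :: "int \<Rightarrow> 'k \<Rightarrow> 'k \<Rightarrow> int"
    and G :: "int \<Rightarrow> ('g,'b) monoid_scheme" and dG :: "int \<Rightarrow> 'g \<Rightarrow> 'g"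
  assumes "chain_setting K d G dG"
  shows "(\<forall>m\<in>ker_dual0 K d G dG.
            (\<forall>f\<in>cocycles0 K d G dG. \<forall>f'\<in>cocycles0 K d G dG.
               coboundaries0 K d G dG #>\<^bsub>cochain_group K G 0\<^esub> f = coboundaries0 K d G dG #>\<^bsub>cochain_group K G 0\<^esub> f'
               \<longrightarrow> m f = m f')
            \<and> mbar K d G dG m \<in> characters (H0_group K d G dG))
       \<and> equiv (Qops K d G dG) (Qrel K d G dG)
       \<and> (\<forall>m\<in>ker_dual0 K d G dG. \<forall>m'\<in>ker_dual0 K d G dG.
            (Qop (cochains K G 0) m, Qop (cochains K G 0) m') \<in> Qrel K d G dG
            \<longrightarrow> mbar K d G dG m = mbar K d G dG m')
       \<and> (\<exists>\<Phi>. bij_betw \<Phi> (Qops K d G dG // Qrel K d G dG) (characters (H0_group K d G dG))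
              \<and> (\<forall>m\<in>ker_dual0 K d G dG. \<Phi> (Qrel K d G dG `` {Qop (cochains K G 0) m}) = mbar K d G dG m))"
  using cs.main[OF cs.intro[OF assms]] .


end
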